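(* Let $G$ be a tree on $n$ vertices $1,2,\ldots,n$ with edges $e_1,\ldots,e_{n-1}$ and incidence matrix $M$, and let $S=M^TM$ be its signless edge-Laplacian. Then the Moore-Penrose inverse $S^+=[s^+_{i,j}]$ of $S$ is given by $$s^+_{i,j}=\frac{(-1)^{d(e_i,e_j)}}{n}\begin{cases}|G_H(e_i)|\,|G_T(e_i)| & \text{if } e_i=e_j,\\ -|G[e_i,e_j)|\,|G(e_i,e_j]| & \text{if } e_i\neq e_j.\end{cases}$$
   Context: The incidence matrix $M$ is the $n\times(n-1)$ matrix with $(i,j)$-entry $1$ if vertex $i$ is incident with edge $e_j$ and $0$ otherwise. Each edge is written $e_i=\{l_i,m_i\}$ with $l_i<m_i$. The head component $G_H(e_i)$ is the component of $G\setminus e_i$ containing $m_i$ and the tail component $G_T(e_i)$ the one containing $l_i$; $|X|$ is the number of vertices of $X$. For a vertex $j$ and edge $e_i=\{l_i,m_i\}$, $d(j,e_i)=d(e_i,j):=\min\{d(j,l_i),d(j,m_i)\}$ (graph distance), and for edges $d(e_i,e_k):=\min\{d(l_i,e_k),d(m_i,e_k)\}$. For distinct edges $e_i,e_j$, $G\setminus\{e_i,e_j\}$ has three components: $G[e_i,e_j)$ is the component containing an endpoint of $e_i$ but no endpoint of $e_j$, and $G(e_i,e_j]$ is the component containing an endpoint of $e_j$ but no endpoint of $e_i$. The Moore-Penrose inverse of a real matrix $A$ is the unique $A^+$ with $AA^+A=A$, $A^+AA^+=A^+$, $(AA^+)^T=AA^+$, $(A^+A)^T=A^+A$. *)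

theory Defs
  imports "Jordan_Normal_Form.Matrix"
begin

text \<open>A graph on vertices 0..<n with edges indexed by 0..<n-1; edge i is the pair
 (l i, m i) = e i with l i < m i.  Vertex k here corresponds to vertex k+1 in the paper,
 edge index i to edge e_(i+1).\<close>

definition ends :: "(nat \<Rightarrow> nat \<times> nat) \<Rightarrow> nat \<Rightarrow> nat set" where
  "ends e i = {fst (e i), snd (e i)}"

definition adj_wo :: "nat \<Rightarrow> (nat \<Rightarrow> nat \<times> nat) \<Rightarrow> nat set \<Rightarrow> nat \<Rightarrow> nat \<Rightarrow> bool" where
  "adj_wo n e X u v = (\<exists>i<n-1. i \<notin> X \<and> ends e i = {u, v})"

definition connected_wo :: "nat \<Rightarrow> (nat \<Rightarrow> nat \<times> nat) \<Rightarrow> nat set \<Rightarrow> nat \<Rightarrow> nat \<Rightarrow> bool" where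
  "connected_wo n e X u v = (adj_wo n e X)\<^sup>*\<^sup>* u v"

definition comp_wo :: "nat \<Rightarrow> (nat \<Rightarrow> nat \<times> nat) \<Rightarrow> nat set \<Rightarrow> nat \<Rightarrow> nat set" where
  "comp_wo n e X v = {u. u < n \<and> connected_wo n e X v u}"

text \<open>Tree: simple graph (edges with l < m, pairwise distinct, endpoints among the
 vertices), connected, and acyclic (no edge lies on a cycle, i.e. removing any edge
 disconnects its endpoints).\<close>
definition is_tree :: "nat \<Rightarrow> (nat \<Rightarrow> nat \<times> nat) \<Rightarrow> bool" where
  "is_tree n e =
    ((\<forall>i<n-1. fst (e i) < snd (e i) \<and> snd (e i) < n) \<and>
     (\<forall>i<n-1. \<forall>j<n-1. e i = e j \<longrightarrow> i = j) \<and>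
     (\<forall>u<n. \<forall>v<n. connected_wo n e {} u v) \<and>
     (\<forall>i<n-1. \<not> connected_wo n e {i} (fst (e i)) (snd (e i))))"

definition gdist :: "nat \<Rightarrow> (nat \<Rightarrow> nat \<times> nat) \<Rightarrow> nat \<Rightarrow> nat \<Rightarrow> nat" where
  "gdist n e u v = (LEAST k. (adj_wo n e {} ^^ k) u v)"

definition vdist_edge :: "nat \<Rightarrow> (nat \<Rightarrow> nat \<times> nat) \<Rightarrow> nat \<Rightarrow> nat \<Rightarrow> nat" where
  "vdist_edge n e v i = min (gdist n e v (fst (e i))) (gdist n e v (snd (e i)))"

definition edist :: "nat \<Rightarrow> (nat \<Rightarrow> nat \<times> nat) \<Rightarrow> nat \<Rightarrow> nat \<Rightarrow> nat" where
  "edist n e i k = min (vdist_edge n e (fst (e i)) k) (vdist_edge n e (snd (e i)) k)"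

definition head_comp :: "nat \<Rightarrow> (nat \<Rightarrow> nat \<times> nat) \<Rightarrow> nat \<Rightarrow> nat set" where
  "head_comp n e i = comp_wo n e {i} (snd (e i))"

definition tail_comp :: "nat \<Rightarrow> (nat \<Rightarrow> nat \<times> nat) \<Rightarrow> nat \<Rightarrow> nat set" where
  "tail_comp n e i = comp_wo n e {i} (fst (e i))"

text \<open>G[e_i,e_j): the component of G minus {e_i,e_j} containing an endpoint of e_i
 but no endpoint of e_j.  (G(e_i,e_j] is between_comp n e j i.)\<close>
definition between_comp :: "nat \<Rightarrow> (nat \<Rightarrow> nat \<times> nat) \<Rightarrow> nat \<Rightarrow> nat \<Rightarrow> nat set" where
  "between_comp n e i j =
    (THE C. \<exists>x\<in>ends e i. C = comp_wo n e {i, j} x \<and> C \<inter> ends e j = {})"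

definition incidence_mat :: "nat \<Rightarrow> (nat \<Rightarrow> nat \<times> nat) \<Rightarrow> real mat" where
  "incidence_mat n e = mat n (n-1) (\<lambda>(v, i). if v \<in> ends e i then 1 else 0)"

definition moore_penrose :: "real mat \<Rightarrow> real mat \<Rightarrow> bool" where
  "moore_penrose A B =
    (B \<in> carrier_mat (dim_col A) (dim_row A) \<and> A * B * A = A \<and> B * A * B = B \<and>
     transpose_mat (A * B) = A * B \<and> transpose_mat (B * A) = B * A)"

definition mp_inverse :: "real mat \<Rightarrow> real mat" where
  "mp_inverse A = (THE B. moore_penrose A B)"

end

theory Submission
  imports Defs "Jordan_Normal_Form.Determinant"
begin

lemma exit_walk:
  "(R ^^ L) x y \<Longrightarrow> x \<in> Y \<Longrightarrow> y \<notin> Y \<Longrightarrow>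
   \<exists>i a b. i < L \<and> (R ^^ i) x a \<and> a \<in> Y \<and> R a b \<and> b \<notin> Y \<and> (R ^^ (L - Suc i)) b y"
proof (induction L arbitrary: x)
  case 0
  then show ?case by auto
next
  case (Suc L)
  from relpowp_Suc_D2[OF Suc.prems(1)] obtain z where z: "R x z" "(R ^^ L) z y" by blast
  show ?case
  proof (cases "z \<in> Y")
    case True
    from Suc.IH[OF z(2) True Suc.prems(3)] obtain i a b where
      h: "i < L" "(R ^^ i) z a" "a \<in> Y" "R a b" "b \<notin> Y" "(R ^^ (L - Suc i)) b y" by blast
    have "(R ^^ Suc i) x a" using z(1) h(2) by (rule relpowp_Suc_I2)
    then show ?thesis using h by (intro exI[of _ "Suc i"]) auto
  next
    case False
    then show ?thesis using z Suc.prems by (intro exI[of _ 0]) auto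
  qed
qed

locale tree =
  fixes n :: nat and e :: "nat \<Rightarrow> nat \<times> nat"
  assumes tree: "is_tree n e"
begin

abbreviation "l i \<equiv> fst (e i)"
abbreviation "m i \<equiv> snd (e i)"
abbreviation "A X \<equiv> adj_wo n e X"
abbreviation "C X \<equiv> connected_wo n e X"

lemma lm: "i < n - 1 \<Longrightarrow> l i < m i \<and> m i < n"
  using tree unfolding is_tree_def by auto

lemma conn: "u < n \<Longrightarrow> v < n \<Longrightarrow> C {} u v"
  using tree unfolding is_tree_def by auto

lemma acyc: "i < n - 1 \<Longrightarrow> \<not> C {i} (l i) (m i)"
  using tree unfolding is_tree_def by auto

lemma ends_eq: "ends e i = {l i, m i}" unfolding ends_def by simp

lemma C_refl: "C X u u" unfolding connected_wo_def by simp

lemma A_sym: "A X u v \<Longrightarrow> A X v u"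
  unfolding adj_wo_def by (auto simp: insert_commute)

lemma C_sym: "C X u v \<Longrightarrow> C X v u"
  unfolding connected_wo_def
proof (induction rule: rtranclp.induct)
  case (rtrancl_refl a) then show ?case by simp
next
  case (rtrancl_into_rtrancl a b c)
  then show ?case using A_sym
    by (meson converse_rtranclp_into_rtranclp)
qed

lemma C_trans: "C X u v \<Longrightarrow> C X v w \<Longrightarrow> C X u w"
  unfolding connected_wo_def by auto

lemma A_mono: "X \<subseteq> Y \<Longrightarrow> A Y u v \<Longrightarrow> A X u v"
  unfolding adj_wo_def by auto

lemma C_mono: "X \<subseteq> Y \<Longrightarrow> C Y u v \<Longrightarrow> C X u v"
  unfolding connected_wo_def
  by (metis (no_types, lifting) A_mono mono_rtranclp)

lemma A_lt: "A X u v \<Longrightarrow> u < n \<and> v < n"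
  unfolding adj_wo_def ends_def using lm
  by (smt (verit) doubleton_eq_iff order.strict_trans)

lemma C_lt: "C X u v \<Longrightarrow> u < n \<Longrightarrow> v < n"
  unfolding connected_wo_def
  by (induction rule: rtranclp.induct) (auto dest: A_lt)

lemma edge_A: "i < n - 1 \<Longrightarrow> i \<notin> X \<Longrightarrow> A X (l i) (m i)"
  unfolding adj_wo_def ends_def by auto

lemma edge_C: "i < n - 1 \<Longrightarrow> i \<notin> X \<Longrightarrow> C X (l i) (m i)"
  unfolding connected_wo_def using edge_A by auto

lemma A_cases: "A X u v \<Longrightarrow> A (insert j X) u v \<or> (j \<notin> X \<and> j < n - 1 \<and> (u = l j \<and> v = m j \<or> u = m j \<and> v = l j))"
  unfolding adj_wo_def ends_def by (auto simp: doubleton_eq_iff)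

lemma A_edge: "A X u v \<Longrightarrow> \<exists>i < n - 1. i \<notin> X \<and> (u = l i \<and> v = m i \<or> u = m i \<and> v = l i)"
  unfolding adj_wo_def ends_def by (auto simp: doubleton_eq_iff)

lemma cut:
  assumes "C X u v"
  shows "C (insert j X) u v \<or> (C (insert j X) u (l j) \<and> C (insert j X) (m j) v)
       \<or> (C (insert j X) u (m j) \<and> C (insert j X) (l j) v)"
  using assms unfolding connected_wo_def
proof (induction rule: rtranclp.induct)
  case (rtrancl_refl a) then show ?case by simp
next
  case (rtrancl_into_rtrancl a b c)
  let ?R = "A (insert j X)"
  from A_cases[OF rtrancl_into_rtrancl(2), of j] show ?case
  proof
    assume "?R b c"
    then show ?thesis using rtrancl_into_rtrancl(3)
      by (meson rtranclp.rtrancl_into_rtrancl)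
  next
    assume h: "j \<notin> X \<and> j < n - 1 \<and> (b = l j \<and> c = m j \<or> b = m j \<and> c = l j)"
    then show ?thesis using rtrancl_into_rtrancl(3)
      by (auto)
  qed
qed

definition "side k p q \<longleftrightarrow> k < n - 1 \<and> (p = l k \<and> q = m k \<or> p = m k \<and> q = l k)"

lemma side_lt: "side k p q \<Longrightarrow> p < n \<and> q < n \<and> p \<noteq> q"
  unfolding side_def using lm by fastforce

lemma side_ends: "side k p q \<Longrightarrow> ends e k = {p, q}"
  unfolding side_def ends_def by auto

lemma side_npq: "side k p q \<Longrightarrow> \<not> C {k} p q"
  unfolding side_def using acyc C_sym by blast

lemma side_part: assumes "side k p q" "v < n" shows "C {k} p v \<or> C {k} q v"
proof -
  have "C {} p v" using conn side_lt[OF assms(1)] assms(2) by blast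
  from cut[OF this, of k] show ?thesis using assms(1) unfolding side_def
    by (auto intro: C_sym)
qed

definition sg :: "nat \<Rightarrow> real" where
  "sg v = (-1) ^ card {j. j < n - 1 \<and> \<not> C {j} 0 v}"

lemma sg_sq: "sg v * sg v = 1"
  unfolding sg_def by (simp add: power_mult_distrib[symmetric])

lemma sg_edge: assumes i: "i < n - 1" shows "sg (m i) = - sg (l i)"
proof -
  let ?Sl = "{j. j < n - 1 \<and> \<not> C {j} 0 (l i)}"
  let ?Sm = "{j. j < n - 1 \<and> \<not> C {j} 0 (m i)}"
  have sd: "side i (l i) (m i)" using i unfolding side_def by simp
  have n0: "0 < n" using lm[OF i] by simp
  have same: "j \<noteq> i \<Longrightarrow> C {j} 0 (l i) \<longleftrightarrow> C {j} 0 (m i)" for j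
    using edge_C[OF i, of "{j}"] C_sym C_trans by blast
  have fin: "finite ?Sl" "finite ?Sm" by auto
  from side_part[OF sd n0] have "C {i} (l i) 0 \<or> C {i} (m i) 0" .
  moreover have "\<not> (C {i} (l i) 0 \<and> C {i} (m i) 0)"
    using side_npq[OF sd] C_sym C_trans by blast
  ultimately consider "C {i} 0 (l i)" "\<not> C {i} 0 (m i)" | "C {i} 0 (m i)" "\<not> C {i} 0 (l i)"
    using C_sym by blast
  then show ?thesis
  proof cases
    case 1
    then have "?Sm = insert i ?Sl" "i \<notin> ?Sl" using same i by (auto, metis)
    then show ?thesis unfolding sg_def using fin by simp
  next
    case 2
    then have "?Sl = insert i ?Sm" "i \<notin> ?Sm" using same i by (auto, metis)
    then show ?thesis unfolding sg_def using fin by simp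
  qed
qed

lemma A_sg: "A X u v \<Longrightarrow> sg v = - sg u"
  using A_edge sg_edge by force

lemma walk_parity: "(A {} ^^ L) u v \<Longrightarrow> (-1) ^ L = sg u * sg v"
proof (induction L arbitrary: v)
  case 0 then show ?case using sg_sq by simp
next
  case (Suc L)
  from relpowp_Suc_E[OF Suc.prems] obtain y where "(A {} ^^ L) u y" "A {} y v" by blast
  then show ?case using Suc.IH A_sg by fastforce
qed

lemma gdist_walk: "C {} u v \<Longrightarrow> (A {} ^^ gdist n e u v) u v"
  unfolding gdist_def connected_wo_def rtranclp_power by (rule LeastI_ex)

lemma gdist_le: "(A {} ^^ L) u v \<Longrightarrow> gdist n e u v \<le> L"
  unfolding gdist_def by (rule Least_le)

lemma gdist_parity: "u < n \<Longrightarrow> v < n \<Longrightarrow> (-1) ^ gdist n e u v = sg u * sg v"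
  using walk_parity gdist_walk conn by blast

lemma gdist_self: "gdist n e u u = 0"
  using gdist_le[of 0 u u] by simp

lemma dist_side: assumes sd: "side k p q" and x: "C {k} p x"
  shows "gdist n e x p < gdist n e x q"
proof -
  have lt: "p < n" "q < n" "p \<noteq> q" using side_lt[OF sd] by auto
  have xn: "x < n" using C_lt[OF x] lt by blast
  let ?L = "gdist n e x q"
  let ?Y = "{v. C {k} p v}"
  have w: "(A {} ^^ ?L) x q" using gdist_walk conn xn lt by blast
  have "q \<notin> ?Y" using side_npq[OF sd] by simp
  from exit_walk[OF w _ this] x obtain i a b where
    h: "i < ?L" "(A {} ^^ i) x a" "a \<in> ?Y" "A {} a b" "b \<notin> ?Y" by auto
  from A_cases[OF h(4), of k] have "a = p"
  proof
    assume "A {k} a b"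
    then have "C {k} a b" unfolding connected_wo_def by auto
    then show ?thesis using h(3,5) C_trans by auto
  next
    assume "k \<notin> {} \<and> k < n - 1 \<and> (a = l k \<and> b = m k \<or> a = m k \<and> b = l k)"
    then show ?thesis using sd h(3,5) C_refl side_npq[OF sd] unfolding side_def by auto
  qed
  then have "gdist n e x p \<le> i" using gdist_le h(2) by blast
  then show ?thesis using h(1) by simp
qed

definition "nf k p q j u w \<longleftrightarrow> side k p q \<and> j < n - 1 \<and> j \<noteq> k \<and>
   (u = l j \<and> w = m j \<or> u = m j \<and> w = l j) \<and> C {j, k} p u"

lemma nf_ex: assumes "side k p q" "j < n - 1" "j \<noteq> k" "C {k} p (l j)"
  shows "\<exists>u w. nf k p q j u w"
proof -
  from cut[OF assms(4), of j] have "C {j,k} p (l j) \<or> C {j,k} p (m j)" by auto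
  then show ?thesis unfolding nf_def using assms by blast
qed

context
  fixes k p q j u w
  assumes nf: "nf k p q j u w"
begin

lemma nf_side: "side k p q" using nf unfolding nf_def by simp
lemma nf_j: "j < n - 1" "j \<noteq> k" using nf unfolding nf_def by auto
lemma nf_uw: "u = l j \<and> w = m j \<or> u = m j \<and> w = l j" using nf unfolding nf_def by auto
lemma nf_pu: "C {j,k} p u" using nf unfolding nf_def by auto
lemma nf_lt: "u < n" "w < n" "u \<noteq> w" "p < n" "q < n" "p \<noteq> q"
  using nf_uw lm[OF nf_j(1)] side_lt[OF nf_side] by auto
lemma nf_ends_j: "ends e j = {u, w}" using nf_uw ends_eq by auto
lemma nf_ends_k: "ends e k = {p, q}" using side_ends[OF nf_side] .

lemma nf_nuw: "\<not> C {j,k} u w"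
proof
  assume "C {j,k} u w"
  then have "C {j} u w" by (rule C_mono[rotated]) auto
  then show False using acyc[OF nf_j(1)] nf_uw C_sym by blast
qed

lemma nf_npw: "\<not> C {j,k} p w"
  using nf_nuw nf_pu C_trans C_sym by blast

lemma nf_kuw: "C {k} p u" "C {k} p w"
proof -
  show "C {k} p u" using nf_pu by (rule C_mono[rotated]) auto
  moreover have "C {k} u w" using edge_C[OF nf_j(1), of "{k}"] nf_j nf_uw by (auto intro: C_sym)
  ultimately show "C {k} p w" using C_trans by blast
qed

abbreviation "F \<equiv> comp_wo n e {j,k} w"

lemma F_sub: "v \<in> F \<Longrightarrow> C {k} p v"
  unfolding comp_wo_def using nf_kuw C_trans C_mono[of "{k}" "{j,k}"] by blast

lemma F_w: "w \<in> F" unfolding comp_wo_def using nf_lt C_refl by simp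

lemma F_not: "p \<notin> F" "u \<notin> F" "q \<notin> F"
  unfolding comp_wo_def using nf_npw nf_nuw C_sym apply auto[2]
  using F_sub side_npq[OF nf_side] unfolding comp_wo_def by blast

lemma F_edges: "i < n - 1 \<Longrightarrow> i \<noteq> j \<Longrightarrow> i \<noteq> k \<Longrightarrow> (l i \<in> F \<longleftrightarrow> m i \<in> F)"
proof -
  assume i: "i < n - 1" "i \<noteq> j" "i \<noteq> k"
  have c: "C {j,k} (l i) (m i)" using edge_C i by auto
  show ?thesis unfolding comp_wo_def using lm[OF i(1)] C_trans[OF _ c] C_trans[OF _ C_sym[OF c]] by auto
qed

lemma F_fin: "finite F" unfolding comp_wo_def by auto

lemma between_jk: "between_comp n e j k = F"
  unfolding between_comp_def
proof (rule the_equality)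
  show "\<exists>x\<in>ends e j. F = comp_wo n e {j, k} x \<and> F \<inter> ends e k = {}"
    using nf_ends_j nf_ends_k F_not by auto
next
  fix D assume "\<exists>x\<in>ends e j. D = comp_wo n e {j, k} x \<and> D \<inter> ends e k = {}"
  then obtain x where x: "x \<in> {u, w}" "D = comp_wo n e {j, k} x" "D \<inter> {p, q} = {}"
    using nf_ends_j nf_ends_k by auto
  have "x \<noteq> u"
  proof
    assume "x = u"
    then have "p \<in> D" using x(2) C_sym[OF nf_pu] nf_lt unfolding comp_wo_def by auto
    then show False using x(3) by auto
  qed
  then show "D = F" using x by auto
qed

lemma comp_q: "comp_wo n e {j,k} q = comp_wo n e {k} q"
proof -
  have "C {j,k} q v" if "C {k} q v" for v
  proof -
    from cut[OF that, of j] have "C {j,k} q v \<or> C {k} q (l j) \<or> C {k} q (m j)"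
      using C_mono[of "{k}" "{j,k}"] by (auto simp: insert_commute)
    moreover have "\<not> C {k} q (l j)" "\<not> C {k} q (m j)"
      using nf_kuw nf_uw side_npq[OF nf_side] C_trans C_sym by metis+
    ultimately show ?thesis by blast
  qed
  moreover have "C {k} q v" if "C {j,k} q v" for v
    using that C_mono[of "{k}" "{j,k}"] by auto
  ultimately show ?thesis unfolding comp_wo_def by blast
qed

lemma between_kj: "between_comp n e k j = comp_wo n e {k} q"
  unfolding between_comp_def
proof (rule the_equality)
  have "comp_wo n e {k} q \<inter> {u, w} = {}"
    using nf_kuw side_npq[OF nf_side] C_trans C_sym unfolding comp_wo_def by blast
  then show "\<exists>x\<in>ends e k. comp_wo n e {k} q = comp_wo n e {k, j} x \<and> comp_wo n e {k} q \<inter> ends e j = {}"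
    using nf_ends_j nf_ends_k comp_q by (auto simp: insert_commute)
next
  fix D assume "\<exists>x\<in>ends e k. D = comp_wo n e {k, j} x \<and> D \<inter> ends e j = {}"
  then obtain x where x: "x \<in> {p, q}" "D = comp_wo n e {j, k} x" "D \<inter> {u, w} = {}"
    using nf_ends_j nf_ends_k by (auto simp: insert_commute)
  have "x \<noteq> p"
  proof
    assume "x = p"
    then have "u \<in> D" using x(2) nf_pu nf_lt unfolding comp_wo_def by auto
    then show False using x(3) by auto
  qed
  then show "D = comp_wo n e {k} q" using x comp_q by auto
qed

lemma dist_uw: "gdist n e u p < gdist n e w p"
proof -
  let ?L = "gdist n e w p"
  let ?Y = "{v. C {j,k} w v}"
  have wk: "(A {} ^^ ?L) w p" using gdist_walk conn nf_lt by blast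
  have "p \<notin> ?Y" using nf_npw C_sym by blast
  from exit_walk[OF wk _ this] C_refl obtain i a b where
    h: "i < ?L" "(A {} ^^ i) w a" "a \<in> ?Y" "A {} a b" "b \<notin> ?Y" "(A {} ^^ (?L - Suc i)) b p"
    by auto
  from A_edge[OF h(4)] obtain i' where i': "i' < n - 1" "a = l i' \<and> b = m i' \<or> a = m i' \<and> b = l i'"
    by auto
  have "b = u"
  proof (cases "i' = j \<or> i' = k")
    case False
    then have "C {j,k} a b" using edge_C[OF i'(1), of "{j,k}"] i'(2) by (auto intro: C_sym)
    then show ?thesis using h(3,5) C_trans by auto
  next
    case True
    then show ?thesis
    proof
      assume "i' = k"
      then have "a = p \<or> a = q" using i'(2) nf_side unfolding side_def by auto
      moreover have "\<not> C {j,k} w q"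
        using F_not(3) nf_lt unfolding comp_wo_def by auto
      ultimately show ?thesis using h(3) \<open>p \<notin> ?Y\<close> by auto
    next
      assume "i' = j"
      then have "a = u \<and> b = w \<or> a = w \<and> b = u" using i'(2) nf_uw by auto
      then show ?thesis using h(3,5) C_refl by auto
    qed
  qed
  then have "gdist n e u p \<le> ?L - Suc i" using gdist_le h(6) by blast
  then show ?thesis using h(1) by simp
qed

lemma edist_nf: "edist n e j k = gdist n e u p"
proof -
  have a: "gdist n e u p < gdist n e u q" using dist_side[OF nf_side nf_kuw(1)] .
  have b: "gdist n e w p < gdist n e w q" using dist_side[OF nf_side nf_kuw(2)] .
  have c: "gdist n e u p < gdist n e w p" by (rule dist_uw)
  show ?thesis using nf_uw nf_side a b c unfolding edist_def vdist_edge_def side_def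
    by (auto simp: min_def)
qed

lemma sign_nf: "(-1) ^ edist n e j k = sg u * sg p"
  using edist_nf gdist_parity nf_lt by simp

end

definition Mf :: "nat \<Rightarrow> nat \<Rightarrow> real" where
  "Mf v i = (if v \<in> ends e i then 1 else 0)"

definition Nv :: "(nat \<Rightarrow> real) \<Rightarrow> nat \<Rightarrow> real" where
  "Nv c v = (\<Sum>i<n - 1. sg v * Mf v i * c i)"

lemma Nv_add: "Nv (\<lambda>t. c1 t + c2 t) x = Nv c1 x + Nv c2 x"
  unfolding Nv_def by (simp add: sum.distrib distrib_left)

lemma Nv_scale: "Nv (\<lambda>t. a * c t) x = a * Nv c x"
  unfolding Nv_def by (simp add: sum_distrib_left mult_ac)

lemma Nv_sum: "finite S \<Longrightarrow> Nv (\<lambda>t. \<Sum>s\<in>S. c s t) x = (\<Sum>s\<in>S. Nv (c s) x)"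
  unfolding Nv_def by (simp add: sum_distrib_left sum.swap[of _ S])

lemma Nv_cong: "(\<And>i. i < n - 1 \<Longrightarrow> c1 i = c2 i) \<Longrightarrow> Nv c1 x = Nv c2 x"
  unfolding Nv_def by (rule sum.cong) auto

lemma sum_pair: "a \<noteq> b \<Longrightarrow> finite X \<Longrightarrow> (\<Sum>v\<in>X. (if v \<in> {a, b} then g v else 0)) =
  (if a \<in> X then g a else 0) + (if b \<in> X then g b else 0)"
proof -
  assume ab: "a \<noteq> b" and X: "finite X"
  have "(\<Sum>v\<in>X. (if v \<in> {a, b} then g v else 0)) = (\<Sum>v\<in>X \<inter> {a,b}. g v)"
    using X by (simp add: sum.inter_restrict)
  also have "X \<inter> {a, b} = (if a \<in> X then {a} else {}) \<union> (if b \<in> X then {b} else {})" by auto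
  also have "(\<Sum>v\<in>\<dots>. g v) = (if a \<in> X then g a else 0) + (if b \<in> X then g b else 0)"
    using ab by (auto simp: sum.union_disjoint)
  finally show ?thesis .
qed

lemma cut_sum:
  assumes X: "finite X" and j: "j < n - 1" and z: "z \<in> ends e j" "X \<inter> ends e j = {z}"
    and oth: "\<And>i. i < n - 1 \<Longrightarrow> i \<noteq> j \<Longrightarrow> (l i \<in> X \<longleftrightarrow> m i \<in> X)"
  shows "(\<Sum>v\<in>X. Nv c v) = sg z * c j"
proof -
  have cs: "(\<Sum>v\<in>X. sg v * Mf v i) = (if i = j then sg z else 0)" if i: "i < n - 1" for i
  proof -
    have ne: "l i \<noteq> m i" using lm[OF i] by simp
    have "(\<Sum>v\<in>X. sg v * Mf v i) = (\<Sum>v\<in>X. (if v \<in> {l i, m i} then sg v else 0))"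
      unfolding Mf_def ends_eq by (rule sum.cong) auto
    also have "\<dots> = (if l i \<in> X then sg (l i) else 0) + (if m i \<in> X then sg (m i) else 0)"
      by (rule sum_pair[OF ne X])
    also have "\<dots> = (if i = j then sg z else 0)"
    proof (cases "i = j")
      case True
      then show ?thesis using z ne unfolding ends_eq by auto
    next
      case False
      then show ?thesis using oth[OF i False] sg_edge[OF i] by auto
    qed
    finally show ?thesis .
  qed
  have "(\<Sum>v\<in>X. Nv c v) = (\<Sum>i<n - 1. c i * (\<Sum>v\<in>X. sg v * Mf v i))"
    unfolding Nv_def by (simp add: sum.swap[of _ X] sum_distrib_left mult_ac)
  also have "\<dots> = (\<Sum>i<n - 1. (if i = j then sg z * c j else 0))"
    by (rule sum.cong) (auto simp: cs)
  also have "\<dots> = sg z * c j" using j by simp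
  finally show ?thesis .
qed

lemma delta_ex: "C {} u v \<Longrightarrow> \<exists>c. \<forall>x<n. Nv c x = (if x = u then 1 else 0) - (if x = v then 1 else 0)"
  unfolding connected_wo_def
proof (induction rule: rtranclp.induct)
  case (rtrancl_refl a)
  then show ?case by (intro exI[of _ "\<lambda>_. 0"]) (simp add: Nv_def)
next
  case (rtrancl_into_rtrancl a b c)
  then obtain c1 where c1: "\<forall>x<n. Nv c1 x = (if x = a then 1 else 0) - (if x = b then 1 else 0)" by blast
  from A_edge[OF rtrancl_into_rtrancl(2)] obtain i where
    i: "i < n - 1" "b = l i \<and> c = m i \<or> b = m i \<and> c = l i" by blast
  have bc: "b \<noteq> c" "sg c = - sg b" using i lm[OF i(1)] sg_edge[OF i(1)] by auto
  define c2 where "c2 = (\<lambda>t. if t = i then sg b else 0)"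
  have "Nv c2 x = (if x = b then 1 else 0) - (if x = c then 1 else 0)" for x
  proof -
    have "Nv c2 x = sg x * Mf x i * sg b" unfolding Nv_def c2_def using i(1)
      by (simp add: if_distrib sum.delta cong: if_cong)
    also have "\<dots> = (if x = b then 1 else 0) - (if x = c then 1 else 0)"
      using i(2) bc sg_sq[of b] unfolding Mf_def ends_eq by auto
    finally show ?thesis .
  qed
  then show ?case using c1 Nv_add[of c1 c2] by (intro exI[of _ "\<lambda>t. c1 t + c2 t"]) auto
qed

definition Bf :: "nat \<Rightarrow> nat \<Rightarrow> real" where
  "Bf i j = (-1) ^ edist n e i j / real n *
      (if i = j then real (card (head_comp n e i)) * real (card (tail_comp n e i))
       else - (real (card (between_comp n e i j)) * real (card (between_comp n e j i))))"

end
lemma dsum: "finite P \<Longrightarrow> finite Q \<Longrightarrow> (\<Sum>v\<in>P. \<Sum>u\<in>Q. (a::real) * ((if x = v then 1 else 0) - (if x = u then 1 else 0))) = a * (real (card Q) * (if x \<in> P then 1 else 0) - real (card P) * (if x \<in> Q then 1 else 0))"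
proof -
  assume P: "finite P" and Q: "finite Q"
  have e1: "(\<Sum>u\<in>Q. a * ((if x = v then 1 else 0) - (if x = u then 1 else 0))) = real (card Q) * (a * (if x = v then 1 else 0)) - a * (if x \<in> Q then 1 else 0)" for v
    using Q by (simp add: right_diff_distrib sum_subtractf if_distrib[of "(*) a"] sum.delta cong: if_cong)
  have "(\<Sum>v\<in>P. \<Sum>u\<in>Q. a * ((if x = v then 1 else 0) - (if x = u then 1 else 0))) = (\<Sum>v\<in>P. real (card Q) * (a * (if x = v then 1 else 0)) - a * (if x \<in> Q then 1 else 0))"
    by (simp only: e1)
  also have "\<dots> = real (card Q) * (a * (if x \<in> P then 1 else 0)) - real (card P) * (a * (if x \<in> Q then 1 else 0))"
    using P by (simp add: sum_subtractf sum_distrib_left[symmetric] if_distrib[of "(*) a"] sum.delta cong: if_cong)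
  finally show ?thesis by (simp add: algebra_simps)
qed
context tree begin

definition qv :: "nat \<Rightarrow> nat \<Rightarrow> real" where
  "qv k x = (if C {k} (l k) x then sg (l k) * real (card (head_comp n e k)) / real n
             else - sg (l k) * real (card (tail_comp n e k)) / real n)"

context
  fixes k assumes k: "k < n - 1"
begin

lemma sd: "side k (l k) (m k)" and sd': "side k (m k) (l k)"
  using k unfolding side_def by auto

lemma n_pos: "0 < n" using k by simp

lemma sepk: "C {k} (l k) x \<Longrightarrow> C {k} (m k) x \<Longrightarrow> False"
proof -
  assume a: "C {k} (l k) x" and b: "C {k} (m k) x"
  have "C {k} (l k) (m k)" using C_trans[OF a C_sym[OF b]] .
  then show False using side_npq[OF sd] by simp
qed

lemma memT: "x \<in> tail_comp n e k \<longleftrightarrow> x < n \<and> C {k} (l k) x"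
  unfolding tail_comp_def comp_wo_def by simp
lemma memH: "x \<in> head_comp n e k \<longleftrightarrow> x < n \<and> C {k} (m k) x"
  unfolding head_comp_def comp_wo_def by simp

lemma TH_fin: "finite (tail_comp n e k)" "finite (head_comp n e k)"
  unfolding tail_comp_def head_comp_def comp_wo_def by auto

lemma TH_card: "card (tail_comp n e k) + card (head_comp n e k) = n"
proof -
  have "tail_comp n e k \<union> head_comp n e k = {..<n}"
    using memT memH side_part[OF sd] by auto
  moreover have "tail_comp n e k \<inter> head_comp n e k = {}"
    using memT memH sepk by auto
  ultimately show ?thesis using card_Un_disjoint[OF TH_fin] by (metis card_lessThan)
qed

lemma c0_ex: "\<exists>c. \<forall>x<n. Nv c x = qv k x"
proof -
  let ?d = "\<lambda>v u x. (if x = v then 1 else 0) - (if x = u then (1::real) else 0)"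
  define cc where "cc v u = (SOME c. \<forall>x<n. Nv c x = ?d v u x)" for v u
  have ccP: "Nv (cc v u) x = ?d v u x" if "v < n" "u < n" "x < n" for v u x
  proof -
    have "\<exists>c. \<forall>x<n. Nv c x = ?d v u x" using delta_ex[OF conn[OF that(1,2)]] .
    from someI_ex[OF this] have "\<forall>x<n. Nv (cc v u) x = ?d v u x" unfolding cc_def .
    then show ?thesis using that(3) by simp
  qed
  let ?T = "tail_comp n e k" and ?H = "head_comp n e k"
  define a where "a = sg (l k) / real n"
  define c0 where "c0 = (\<lambda>t. \<Sum>v\<in>?T. \<Sum>u\<in>?H. a * cc v u t)"
  have "Nv c0 x = qv k x" if x: "x < n" for x
  proof -
    have "Nv c0 x = (\<Sum>v\<in>?T. \<Sum>u\<in>?H. a * Nv (cc v u) x)"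
      unfolding c0_def using TH_fin by (simp add: Nv_sum Nv_scale)
    also have "\<dots> = (\<Sum>v\<in>?T. \<Sum>u\<in>?H. a * ?d v u x)"
    proof (rule sum.cong[OF refl], rule sum.cong[OF refl])
      fix v u assume "v \<in> ?T" "u \<in> ?H"
      then show "a * Nv (cc v u) x = a * ?d v u x" using ccP[of v u x] x memT memH by simp
    qed
    also have "\<dots> = a * (real (card ?H) * (if x \<in> ?T then 1 else 0) - real (card ?T) * (if x \<in> ?H then 1 else 0))"
      by (rule dsum[OF TH_fin])
    also have "\<dots> = qv k x"
    proof (cases "C {k} (l k) x")
      case True
      then have "\<not> C {k} (m k) x" using sepk by blast
      then have "x \<notin> ?H" by (simp add: memH)
      then show ?thesis using True x memT unfolding qv_def a_def by simp
    next
      case False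
      then have "C {k} (m k) x" using side_part[OF sd x] by simp
      then have "x \<in> ?H" using x by (simp add: memH)
      then show ?thesis using False x memT unfolding qv_def a_def by simp
    qed
    finally show ?thesis .
  qed
  then show ?thesis by blast
qed

lemma edist_kk: "edist n e k k = 0"
  unfolding edist_def vdist_edge_def using gdist_self by simp

lemma match: assumes j: "j < n - 1"
  shows "\<exists>X z. finite X \<and> z \<in> ends e j \<and> X \<inter> ends e j = {z} \<and>
     (\<forall>i<n - 1. i \<noteq> j \<longrightarrow> (l i \<in> X \<longleftrightarrow> m i \<in> X)) \<and> (\<Sum>v\<in>X. qv k v) = sg z * Bf j k \<and> (\<forall>v\<in>X. v < n)"
proof (cases "j = k")
  case True
  let ?T = "tail_comp n e k" and ?H = "head_comp n e k"
  have "l k \<in> ?T" "m k \<notin> ?T" using memT C_refl lm[OF k] side_npq[OF sd] by auto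
  then have a: "?T \<inter> ends e k = {l k}" unfolding ends_eq by auto
  have b: "\<forall>i<n - 1. i \<noteq> k \<longrightarrow> (l i \<in> ?T \<longleftrightarrow> m i \<in> ?T)"
  proof (intro allI impI)
    fix i assume i: "i < n - 1" "i \<noteq> k"
    have c: "C {k} (l i) (m i)" using edge_C i by auto
    show "l i \<in> ?T \<longleftrightarrow> m i \<in> ?T" unfolding memT
      using lm[OF i(1)] C_trans[OF _ c] C_trans[OF _ C_sym[OF c]] by auto
  qed
  have "(\<Sum>v\<in>?T. qv k v) = (\<Sum>v\<in>?T. sg (l k) * real (card ?H) / real n)"
    by (rule sum.cong) (auto simp: memT qv_def)
  also have "\<dots> = sg (l k) * Bf k k"
    unfolding Bf_def edist_kk by simp
  moreover have "\<forall>v\<in>?T. v < n" using memT by simp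
  ultimately show ?thesis using True a b TH_fin ends_eq by (intro exI[of _ ?T] exI[of _ "l k"]) auto
next
  case False
  have ljn: "l j < n" using lm[OF j] by simp
  let ?T = "tail_comp n e k" and ?H = "head_comp n e k"
  have sgu: "sg u * sg w = -1" if "nf k p q j u w" for p q u w
    using nf_uw[OF that] sg_edge[OF j] sg_sq by auto
  have common: "\<exists>X z. finite X \<and> z \<in> ends e j \<and> X \<inter> ends e j = {z} \<and>
     (\<forall>i<n - 1. i \<noteq> j \<longrightarrow> (l i \<in> X \<longleftrightarrow> m i \<in> X)) \<and>
     (\<forall>v\<in>X. C {k} p v) \<and> Bf j k = sg u * sg p / real n * (- (real (card X) * real (card (comp_wo n e {k} q))))
     \<and> sg u * sg z = -1 \<and> (\<forall>v\<in>X. v < n)"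
    if nfh: "nf k p q j u w" for p q u w
  proof -
    let ?F = "comp_wo n e {j,k} w"
    have "?F \<inter> ends e j = {w}" using F_w[OF nfh] F_not[OF nfh] nf_ends_j[OF nfh] by auto
    moreover have "\<forall>i<n - 1. i \<noteq> j \<longrightarrow> (l i \<in> ?F \<longleftrightarrow> m i \<in> ?F)"
    proof (intro allI impI)
      fix i assume i: "i < n - 1" "i \<noteq> j"
      show "l i \<in> ?F \<longleftrightarrow> m i \<in> ?F"
      proof (cases "i = k")
        case True
        then have "l i \<notin> ?F" "m i \<notin> ?F" using F_not[OF nfh] nf_side[OF nfh] unfolding side_def by auto
        then show ?thesis by simp
      qed (use F_edges[OF nfh] i in auto)
    qed
    moreover have "Bf j k = sg u * sg p / real n * (- (real (card ?F) * real (card (comp_wo n e {k} q))))"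
      unfolding Bf_def using False sign_nf[OF nfh] between_jk[OF nfh] between_kj[OF nfh] by simp
    moreover have "\<forall>v\<in>?F. v < n" unfolding comp_wo_def by simp
    ultimately show ?thesis using F_fin[OF nfh] nf_ends_j[OF nfh] F_sub[OF nfh] sgu[OF nfh]
      by (intro exI[of _ ?F] exI[of _ w]) auto
  qed
  from side_part[OF sd ljn] show ?thesis
  proof
    assume "C {k} (l k) (l j)"
    then obtain u w where nfh: "nf k (l k) (m k) j u w" using nf_ex[OF sd j False] by blast
    from common[OF nfh] obtain X z where h: "finite X" "z \<in> ends e j" "X \<inter> ends e j = {z}"
      "\<forall>i<n - 1. i \<noteq> j \<longrightarrow> (l i \<in> X \<longleftrightarrow> m i \<in> X)" "\<forall>v\<in>X. C {k} (l k) v"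
      "Bf j k = sg u * sg (l k) / real n * (- (real (card X) * real (card ?H)))" "sg u * sg z = -1" "\<forall>v\<in>X. v < n"
      unfolding head_comp_def by blast
    have "(\<Sum>v\<in>X. qv k v) = (\<Sum>v\<in>X. sg (l k) * real (card ?H) / real n)"
      using h(5) by (intro sum.cong) (auto simp: qv_def)
    also have "\<dots> = sg z * Bf j k"
    proof -
      have "sg z * Bf j k = - (sg u * sg z) * sg (l k) * real (card X) * real (card ?H) / real n"
        unfolding h(6) by (simp add: field_simps)
      then show ?thesis using h(7) by simp
    qed
    finally show ?thesis using h by blast
  next
    assume "C {k} (m k) (l j)"
    then obtain u w where nfh: "nf k (m k) (l k) j u w" using nf_ex[OF sd' j False] by blast
    from common[OF nfh] obtain X z where h: "finite X" "z \<in> ends e j" "X \<inter> ends e j = {z}"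
      "\<forall>i<n - 1. i \<noteq> j \<longrightarrow> (l i \<in> X \<longleftrightarrow> m i \<in> X)" "\<forall>v\<in>X. C {k} (m k) v"
      "Bf j k = sg u * sg (m k) / real n * (- (real (card X) * real (card ?T)))" "sg u * sg z = -1" "\<forall>v\<in>X. v < n"
      unfolding tail_comp_def by blast
    have nl: "\<not> C {k} (l k) v" if "v \<in> X" for v
      using h(5) that sepk by auto
    have "(\<Sum>v\<in>X. qv k v) = (\<Sum>v\<in>X. - sg (l k) * real (card ?T) / real n)"
      using nl by (intro sum.cong) (auto simp: qv_def)
    also have "\<dots> = sg z * Bf j k"
    proof -
      have "sg z * Bf j k = - (sg u * sg z) * sg (m k) * real (card X) * real (card ?T) / real n"
        unfolding h(6) by (simp add: field_simps)
      then show ?thesis using h(7) sg_edge[OF k] by simp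
    qed
    finally show ?thesis using h by blast
  qed
qed


lemma Bf_Nv: assumes x: "x < n" shows "Nv (\<lambda>j. Bf j k) x = qv k x"
proof -
  obtain c where c: "\<forall>x<n. Nv c x = qv k x" using c0_ex by blast
  have "c j = Bf j k" if j: "j < n - 1" for j
  proof -
    from match[OF j] obtain X z where h: "finite X" "z \<in> ends e j" "X \<inter> ends e j = {z}"
      "\<forall>i<n - 1. i \<noteq> j \<longrightarrow> (l i \<in> X \<longleftrightarrow> m i \<in> X)" "(\<Sum>v\<in>X. qv k v) = sg z * Bf j k"
      "\<forall>v\<in>X. v < n" by blast
    have "(\<Sum>v\<in>X. Nv c v) = sg z * c j"
      by (rule cut_sum[OF h(1) j h(2) h(3)]) (use h(4) in auto)
    moreover have "(\<Sum>v\<in>X. Nv c v) = (\<Sum>v\<in>X. qv k v)"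
      using c h(6) by (intro sum.cong) auto
    ultimately have "sg z * c j = sg z * Bf j k" using h(5) by metis
    moreover have "sg z \<noteq> 0" using sg_sq[of z] by auto
    ultimately show ?thesis by (metis mult_left_cancel)
  qed
  then have "Nv (\<lambda>j. Bf j k) x = Nv c x" by (intro Nv_cong) simp
  then show ?thesis using c x by simp
qed

lemma col: assumes i: "i < n - 1"
  shows "(\<Sum>j<n - 1. (\<Sum>v<n. Mf v i * Mf v j) * Bf j k) = (if i = k then 1 else 0)"
proof -
  have "(\<Sum>j<n - 1. (\<Sum>v<n. Mf v i * Mf v j) * Bf j k) = (\<Sum>v<n. \<Sum>j<n - 1. Mf v i * Mf v j * Bf j k)"
    unfolding sum_distrib_right by (rule sum.swap)
  also have "\<dots> = (\<Sum>v<n. sg v * Mf v i * Nv (\<lambda>j. Bf j k) v)"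
  proof (rule sum.cong[OF refl])
    fix v
    have "sg v * Mf v i * Nv (\<lambda>j. Bf j k) v = (\<Sum>j<n - 1. (sg v * sg v) * (Mf v i * Mf v j * Bf j k))"
      unfolding Nv_def by (simp add: sum_distrib_left mult_ac)
    then show "(\<Sum>j<n - 1. Mf v i * Mf v j * Bf j k) = sg v * Mf v i * Nv (\<lambda>j. Bf j k) v"
      by (simp add: sg_sq)
  qed
  also have "\<dots> = (\<Sum>v<n. sg v * Mf v i * qv k v)"
    using Bf_Nv by (intro sum.cong) auto
  also have "\<dots> = (\<Sum>v<n. (if v \<in> {l i, m i} then sg v * qv k v else 0))"
    unfolding Mf_def ends_eq by (intro sum.cong) auto
  also have "\<dots> = sg (l i) * qv k (l i) + sg (m i) * qv k (m i)"
    using sum_pair[of "l i" "m i" "{..<n}"] lm[OF i] by simp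
  also have "\<dots> = (if i = k then 1 else 0)"
  proof (cases "i = k")
    case True
    have "\<not> C {k} (l k) (m k)" using side_npq[OF sd] .
    then have "sg (l i) * qv k (l i) + sg (m i) * qv k (m i) =
       (sg (l k) * sg (l k)) * (real (card (head_comp n e k)) + real (card (tail_comp n e k))) / real n"
      unfolding qv_def using True C_refl sg_edge[OF k] n_pos by (simp add: field_simps)
    also have "\<dots> = 1" using TH_card n_pos sg_sq by simp
    finally show ?thesis using True by simp
  next
    case False
    have c: "C {k} (l i) (m i)" using edge_C i False by auto
    have "C {k} (l k) (l i) \<longleftrightarrow> C {k} (l k) (m i)"
      using C_trans[OF _ c] C_trans[OF _ C_sym[OF c]] by blast
    then have "qv k (l i) = qv k (m i)" unfolding qv_def by simp
    then show ?thesis using False sg_edge[OF i] by simp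
  qed
  finally show ?thesis .
qed

end

end
lemma mp_unique:
  fixes S B :: "real mat"
  assumes Sc: "S \<in> carrier_mat N N" and Bc: "B \<in> carrier_mat N N"
    and SB: "S * B = 1\<^sub>m N" and BS: "B * S = 1\<^sub>m N"
  shows "mp_inverse S = B"
  unfolding mp_inverse_def
proof (rule the_equality)
  show "moore_penrose S B" unfolding moore_penrose_def
    using Sc Bc SB BS by (simp add: assoc_mult_mat[of S N N B N S N, symmetric])
next
  fix B' assume "moore_penrose S B'"
  then have B'c: "B' \<in> carrier_mat N N" and h: "S * B' * S = S"
    using Sc unfolding moore_penrose_def by auto
  have "B' = (B * S) * B' * (S * B)" using BS SB B'c by simp
  also have "\<dots> = B * (S * B' * S) * B"
  proof -
    have SB'c: "S * B' \<in> carrier_mat N N" using Sc B'c by simp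
    have SBc: "S * B \<in> carrier_mat N N" using Sc Bc by simp
    have SB'Sc: "S * B' * S \<in> carrier_mat N N" using SB'c Sc by simp
    have "(B * S) * B' * (S * B) = B * (S * B') * (S * B)"
      using assoc_mult_mat[OF Bc Sc B'c] by simp
    also have "\<dots> = B * ((S * B') * (S * B))"
      using assoc_mult_mat[OF Bc SB'c SBc] by simp
    also have "(S * B') * (S * B) = ((S * B') * S) * B"
      using assoc_mult_mat[OF SB'c Sc Bc] by simp
    also have "B * (((S * B') * S) * B) = (B * ((S * B') * S)) * B"
      using assoc_mult_mat[OF Bc SB'Sc Bc] by simp
    finally show ?thesis .
  qed
  also have "\<dots> = B" using h Bc BS by (simp add: assoc_mult_mat[of B N N S N B N, symmetric] Sc)
  finally show "B' = B" .
qed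

theorem mainTheorem4:
  fixes n :: nat and e :: "nat \<Rightarrow> nat \<times> nat"
  assumes "is_tree n e"
  defines "M \<equiv> incidence_mat n e"
  defines "S \<equiv> transpose_mat M * M"
  shows "mp_inverse S =
    mat (n-1) (n-1) (\<lambda>(i, j).
      (-1) ^ edist n e i j / real n *
      (if i = j then real (card (head_comp n e i)) * real (card (tail_comp n e i))
       else - (real (card (between_comp n e i j)) * real (card (between_comp n e j i)))))"
proof -
  interpret tree n e using assms(1) by unfold_locales
  define B where "B = mat (n-1) (n-1) (\<lambda>(i, j).
      (-1) ^ edist n e i j / real n *
      (if i = j then real (card (head_comp n e i)) * real (card (tail_comp n e i))
       else - (real (card (between_comp n e i j)) * real (card (between_comp n e j i)))) :: real)"
  have Mc: "M \<in> carrier_mat n (n-1)" unfolding M_def incidence_mat_def by simp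
  have Sc: "S \<in> carrier_mat (n-1) (n-1)" unfolding S_def using Mc by auto
  have Bc: "B \<in> carrier_mat (n-1) (n-1)" unfolding B_def by simp
  have Bij: "B $$ (j, k) = Bf j k" if "j < n - 1" "k < n - 1" for j k
    unfolding B_def Bf_def using that by simp
  have Sij: "S $$ (i, j) = (\<Sum>v<n. Mf v i * Mf v j)" if "i < n - 1" "j < n - 1" for i j
  proof -
    have "S $$ (i, j) = (\<Sum>v\<in>{0..<n}. M $$ (v, i) * M $$ (v, j))"
      unfolding S_def using that Mc by (simp add: scalar_prod_def)
    also have "\<dots> = (\<Sum>v<n. Mf v i * Mf v j)"
      using that unfolding M_def incidence_mat_def Mf_def by (intro sum.cong) auto
    finally show ?thesis .
  qed
  have SB: "S * B = 1\<^sub>m (n-1)"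
  proof (rule eq_matI)
    fix i k assume "i < dim_row (1\<^sub>m (n - 1) :: real mat)" "k < dim_col (1\<^sub>m (n - 1) :: real mat)"
    then have ik: "i < n - 1" "k < n - 1" by auto
    have "(S * B) $$ (i, k) = (\<Sum>j\<in>{0..<n-1}. S $$ (i, j) * B $$ (j, k))"
      using Sc Bc ik by (simp add: scalar_prod_def)
    also have "\<dots> = (\<Sum>j<n - 1. (\<Sum>v<n. Mf v i * Mf v j) * Bf j k)"
      using ik Sij Bij by (intro sum.cong) auto
    also have "\<dots> = (if i = k then 1 else 0)" using col[OF ik(2) ik(1)] .
    finally show "(S * B) $$ (i, k) = 1\<^sub>m (n - 1) $$ (i, k)" using ik by simp
  qed (use Sc Bc in auto)
  have BS: "B * S = 1\<^sub>m (n-1)" using mat_mult_left_right_inverse[OF Sc Bc SB] .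
  show ?thesis using mp_unique[OF Sc Bc SB BS] unfolding B_def .
qed

end
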